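(* Let $\boldsymbol\Delta=(\Delta_1,\dots,\Delta_9)$ be a probability vector, let $p_1,p_2,\dots\in[0,1]$, and let $X_1,X_2,\dots$ be independent random joint genotypes with $X_i$ taking values $x\in\{0000,1111,1101,0111,0101,1100,0011,0100,0001\}$ with probabilities $f^{(i)}_x$ given, with $p=p_i$, $q=1-p_i$, by \begin{align*} f_{0000} &= q\Delta_1 + q^2(\Delta_2+\Delta_3+\Delta_5+\Delta_7)+q^3(\Delta_4+\Delta_6+\Delta_8)+q^4\Delta_9,\\ f_{1111} &= p\Delta_1 + p^2(\Delta_2+\Delta_3+\Delta_5+\Delta_7)+p^3(\Delta_4+\Delta_6+\Delta_8)+p^4\Delta_9,\\ f_{1101} &= pq\bigl(\Delta_3 + p(\Delta_8+2\Delta_4+2p\Delta_9)\bigr),\quad f_{0111} = pq\bigl(\Delta_5 + p(\Delta_8+2\Delta_6+2p\Delta_9)\bigr),\\ f_{0101} &= pq\bigl(2\Delta_7+q\Delta_8+4pq\Delta_9\bigr),\\ f_{1100} &= pq\bigl(\Delta_2+q\Delta_4+p\Delta_6+pq\Delta_9\bigr),\quad f_{0011} = pq\bigl(\Delta_2+q\Delta_6+p\Delta_4+pq\Delta_9\bigr),\\ f_{0100} &= pq\bigl(\Delta_5+q\Delta_8+2q\Delta_6+2q^2\Delta_9\bigr),\quad f_{0001} = pq\bigl(\Delta_3+q\Delta_8+2q\Delta_4+2q^2\Delta_9\bigr). \end{align*} For each $n$ let $\hat f_x=\frac1n\sum_{i=1}^n\mathbf 1\{X_i=x\}$ and define \begin{align*}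 \hat\tau_{1\mathrm A}&=\tfrac12(\hat f_{1101}+\hat f_{0100})+\tfrac14\hat f_{0101}+\hat f_{1100}, & \hat\tau_{1\mathrm B}&=\tfrac12(\hat f_{0111}+\hat f_{0001})+\tfrac14\hat f_{0101}+\hat f_{0011},\\ \hat\tau_1&=\tfrac12(\hat\tau_{1\mathrm A}+\hat\tau_{1\mathrm B}),\\ \hat\tau_{2\mathrm A}&=\tfrac12(\hat f_{0111}+\hat f_{0101}+\hat f_{0100}), & \hat\tau_{2\mathrm B}&=\tfrac12(\hat f_{1101}+\hat f_{0101}+\hat f_{0001}),\\ \hat\tau_3&=\tfrac14\bigl((\hat f_{0100}-\hat f_{0111})+(\hat f_{0001}-\hat f_{1101})\bigr), & \hat\tau_4&=\tfrac12(\hat f_{1100}-\hat f_{0011}), \end{align*} $\bar\nu_2=\frac1n\sum_{i=1}^n p_i(1-p_i)$, $\bar\nu_3=\frac1n\sum_{i=1}^n p_i(1-p_i)(1-2p_i)$, and the estimators \[ \hat\theta_1=1-\frac{\hat\tau_1}{\bar\nu_2},\quad \hat\theta_{2\mathrm A}=1-\frac{\hat\tau_{2\mathrm A}}{\bar\nu_2},\quad \hat\theta_{2\mathrm B}=1-\frac{\hat\tau_{2\mathrm B}}{\bar\nu_2},\quad \hat\theta_3=1-\frac{\hat\tau_3}{\bar\nu_3},\quad \hat\theta_4=\frac{\hat\tau_4}{\bar\nu_3}. \] Suppose there exist constants $\nu_2,\nu_3$ with $\nu_2\neq0$ and $\nu_3\neq0$ such that $\bar\nu_2\to\nu_2$ and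 $\bar\nu_3\to\nu_3$ in probability as $n\to\infty$. Then $\hat\theta_y\to\theta_y$ in probability as $n\to\infty$ for each $y\in\{1,2\mathrm A,2\mathrm B,3,4\}$, where \begin{align*} \theta_1&=\Delta_1+\tfrac12(\Delta_3+\Delta_5+\Delta_7)+\tfrac14\Delta_8,\quad \theta_{2\mathrm A}=\Delta_1+\Delta_2+\Delta_3+\Delta_4,\quad \theta_{2\mathrm B}=\Delta_1+\Delta_2+\Delta_5+\Delta_6,\\ \theta_3&=\Delta_1+\Delta_2+\Delta_3+\Delta_5+\Delta_7+\tfrac12(\Delta_4+\Delta_6+\Delta_8),\quad \theta_4=\tfrac12(\Delta_4-\Delta_6). \end{align*}
   Context: $\boldsymbol\Delta$ is the vector of Jacquard's identity coefficients (probabilities of the nine identity-by-descent modes) for a pair of diploid individuals A, B, common to all loci; $p_i$ is the frequency of allele 1 at the $i$-th independent biallelic locus. The genotype label $abcd$ means A has unordered genotype $a/b$ and B has unordered genotype $c/d$ (e.g. $1101$: A is $1/1$, B is $0/1$). *)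

theory Defs
  imports "HOL-Probability.Probability"
begin

text \<open>Joint genotypes: G_abcd means A has genotype a/b and B has genotype c/d.\<close>
datatype genotype = G0000 | G1111 | G1101 | G0111 | G0101 | G1100 | G0011 | G0100 | G0001

text \<open>Jacquard coefficients are indexed D 1, ..., D 9.\<close>
definition prob_vector9 :: "(nat \<Rightarrow> real) \<Rightarrow> bool" where
  "prob_vector9 D \<longleftrightarrow> (\<forall>k\<in>{1..9}. 0 \<le> D k) \<and> (\<Sum>k=1..9. D k) = 1"

fun geno_prob :: "(nat \<Rightarrow> real) \<Rightarrow> real \<Rightarrow> genotype \<Rightarrow> real" where
  "geno_prob D p G0000 = (let q = 1 - p in
      q * D 1 + q^2 * (D 2 + D 3 + D 5 + D 7) + q^3 * (D 4 + D 6 + D 8) + q^4 * D 9)"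
| "geno_prob D p G1111 =
      p * D 1 + p^2 * (D 2 + D 3 + D 5 + D 7) + p^3 * (D 4 + D 6 + D 8) + p^4 * D 9"
| "geno_prob D p G1101 = (let q = 1 - p in p * q * (D 3 + p * (D 8 + 2 * D 4 + 2 * p * D 9)))"
| "geno_prob D p G0111 = (let q = 1 - p in p * q * (D 5 + p * (D 8 + 2 * D 6 + 2 * p * D 9)))"
| "geno_prob D p G0101 = (let q = 1 - p in p * q * (2 * D 7 + q * D 8 + 4 * p * q * D 9))"
| "geno_prob D p G1100 = (let q = 1 - p in p * q * (D 2 + q * D 4 + p * D 6 + p * q * D 9))"
| "geno_prob D p G0011 = (let q = 1 - p in p * q * (D 2 + q * D 6 + p * D 4 + p * q * D 9))"
| "geno_prob D p G0100 = (let q = 1 - p in p * q * (D 5 + q * D 8 + 2 * q * D 6 + 2 * q^2 * D 9))"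
| "geno_prob D p G0001 = (let q = 1 - p in p * q * (D 3 + q * D 8 + 2 * q * D 4 + 2 * q^2 * D 9))"

definition fhat :: "(nat \<Rightarrow> 'a \<Rightarrow> genotype) \<Rightarrow> nat \<Rightarrow> genotype \<Rightarrow> 'a \<Rightarrow> real" where
  "fhat X n x \<omega> = (1 / real n) * (\<Sum>i=1..n. if X i \<omega> = x then 1 else 0)"

definition nu2bar :: "(nat \<Rightarrow> real) \<Rightarrow> nat \<Rightarrow> real" where
  "nu2bar p n = (1 / real n) * (\<Sum>i=1..n. p i * (1 - p i))"

definition nu3bar :: "(nat \<Rightarrow> real) \<Rightarrow> nat \<Rightarrow> real" where
  "nu3bar p n = (1 / real n) * (\<Sum>i=1..n. p i * (1 - p i) * (1 - 2 * p i))"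

datatype est = E1 | E2A | E2B | E3 | E4

definition tau1A where
  "tau1A X n \<omega> = (1/2) * (fhat X n G1101 \<omega> + fhat X n G0100 \<omega>) + (1/4) * fhat X n G0101 \<omega>
     + fhat X n G1100 \<omega>"
definition tau1B where
  "tau1B X n \<omega> = (1/2) * (fhat X n G0111 \<omega> + fhat X n G0001 \<omega>) + (1/4) * fhat X n G0101 \<omega>
     + fhat X n G0011 \<omega>"
definition tau1 where
  "tau1 X n \<omega> = (1/2) * (tau1A X n \<omega> + tau1B X n \<omega>)"
definition tau2A where
  "tau2A X n \<omega> = (1/2) * (fhat X n G0111 \<omega> + fhat X n G0101 \<omega> + fhat X n G0100 \<omega>)"
definition tau2B where
  "tau2B X n \<omega> = (1/2) * (fhat X n G1101 \<omega> + fhat X n G0101 \<omega> + fhat X n G0001 \<omega>)"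
definition tau3 where
  "tau3 X n \<omega> = (1/4) * ((fhat X n G0100 \<omega> - fhat X n G0111 \<omega>) + (fhat X n G0001 \<omega> - fhat X n G1101 \<omega>))"
definition tau4 where
  "tau4 X n \<omega> = (1/2) * (fhat X n G1100 \<omega> - fhat X n G0011 \<omega>)"

fun theta_hat :: "(nat \<Rightarrow> real) \<Rightarrow> (nat \<Rightarrow> 'a \<Rightarrow> genotype) \<Rightarrow> est \<Rightarrow> nat \<Rightarrow> 'a \<Rightarrow> real" where
  "theta_hat p X E1 n \<omega> = 1 - tau1 X n \<omega> / nu2bar p n"
| "theta_hat p X E2A n \<omega> = 1 - tau2A X n \<omega> / nu2bar p n"
| "theta_hat p X E2B n \<omega> = 1 - tau2B X n \<omega> / nu2bar p n"
| "theta_hat p X E3 n \<omega> = 1 - tau3 X n \<omega> / nu3bar p n"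
| "theta_hat p X E4 n \<omega> = tau4 X n \<omega> / nu3bar p n"

fun theta :: "(nat \<Rightarrow> real) \<Rightarrow> est \<Rightarrow> real" where
  "theta D E1 = D 1 + (1/2) * (D 3 + D 5 + D 7) + (1/4) * D 8"
| "theta D E2A = D 1 + D 2 + D 3 + D 4"
| "theta D E2B = D 1 + D 2 + D 5 + D 6"
| "theta D E3 = D 1 + D 2 + D 3 + D 5 + D 7 + (1/2) * (D 4 + D 6 + D 8)"
| "theta D E4 = (1/2) * (D 4 - D 6)"

definition conv_in_prob :: "'a measure \<Rightarrow> (nat \<Rightarrow> 'a \<Rightarrow> real) \<Rightarrow> real \<Rightarrow> bool" where
  "conv_in_prob M Y c \<longleftrightarrow>
     (\<forall>e>0. (\<lambda>n. measure M {\<omega> \<in> space M. e < \<bar>Y n \<omega> - c\<bar>}) \<longlonglongrightarrow> 0)"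

end

theory Submission imports Defs begin
lemma (in prob_space) wlln_bounded:
  fixes Y :: "nat \<Rightarrow> 'a \<Rightarrow> real"
  assumes ind: "indep_vars (\<lambda>_. borel) Y {1..}"
    and bnd: "\<And>i \<omega>. i \<ge> 1 \<Longrightarrow> \<omega> \<in> space M \<Longrightarrow> \<bar>Y i \<omega>\<bar> \<le> B"
    and B0: "0 \<le> B"
    and mean0: "\<And>i. i \<ge> 1 \<Longrightarrow> expectation (Y i) = 0"
    and e: "e > 0"
  shows "(\<lambda>n. prob {\<omega>\<in>space M. e < \<bar>(\<Sum>i=1..n. Y i \<omega>) / real n\<bar>}) \<longlonglongrightarrow> 0"
proof -
  have rv[measurable]: "Y i \<in> borel_measurable M" if "i \<ge> 1" for i
    using ind that by (auto simp: indep_vars_def)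
  have intY: "integrable M (Y i)" if "i \<ge> 1" for i
    by (rule integrable_const_bound[of _ B]) (use bnd that in auto)
  have intP: "integrable M (\<lambda>\<omega>. Y i \<omega> * Y j \<omega>)" if "i \<ge> 1" "j \<ge> 1" for i j
  proof (rule integrable_const_bound[of _ "B*B"])
    show "AE x in M. norm (Y i x * Y j x) \<le> B * B"
      using bnd that B0 by (auto simp: abs_mult intro!: AE_I2 mult_mono)
  qed (use that in auto)
  have cross: "expectation (\<lambda>\<omega>. Y i \<omega> * Y j \<omega>) = 0" if "i \<ge> 1" "j \<ge> 1" "i \<noteq> j" for i j
  proof -
    have "indep_vars (\<lambda>_. borel) Y {i,j}"
      by (rule indep_vars_subset[OF ind]) (use that in auto)
    then have "expectation (\<lambda>\<omega>. \<Prod>k\<in>{i,j}. Y k \<omega>) = (\<Prod>k\<in>{i,j}. expectation (Y k))"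
      by (intro indep_vars_lebesgue_integral) (use that intY in auto)
    then show ?thesis using that mean0 by simp
  qed
  have diag: "expectation (\<lambda>\<omega>. Y i \<omega> * Y i \<omega>) \<le> B * B" if "i \<ge> 1" for i
  proof -
    have pt: "Y i \<omega> * Y i \<omega> \<le> B * B" if "\<omega> \<in> space M" for \<omega>
    proof -
      have a: "\<bar>Y i \<omega>\<bar> \<le> B" using bnd[OF \<open>i \<ge> 1\<close> that] .
      have "Y i \<omega> * Y i \<omega> = \<bar>Y i \<omega>\<bar> * \<bar>Y i \<omega>\<bar>" by simp
      also have "\<dots> \<le> B * B" by (rule mult_mono[OF a a]) (use B0 in auto)
      finally show ?thesis .
    qed
    have "expectation (\<lambda>\<omega>. Y i \<omega> * Y i \<omega>) \<le> expectation (\<lambda>\<omega>. B * B)"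
      by (rule integral_mono[OF intP[OF that that] integrable_const pt])
    then show ?thesis by (simp add: prob_space)
  qed
  define S where "S n \<omega> = (\<Sum>i=1..n. Y i \<omega>)" for n \<omega>
  have rvS[measurable]: "S n \<in> borel_measurable M" for n
    unfolding S_def by (intro borel_measurable_sum) auto
  have sq: "(\<lambda>\<omega>. (S n \<omega>)^2) = (\<lambda>\<omega>. \<Sum>i\<in>{1..n}. \<Sum>j\<in>{1..n}. Y i \<omega> * Y j \<omega>)" for n
    unfolding S_def power2_eq_square sum_product by simp
  have intS2: "integrable M (\<lambda>\<omega>. (S n \<omega>)^2)" for n
    unfolding sq by (intro Bochner_Integration.integrable_sum intP) auto
  have ES: "expectation (S n) = 0" for n
    unfolding S_def by (subst Bochner_Integration.integral_sum) (use intY mean0 in auto)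
  have ES2: "expectation (\<lambda>\<omega>. (S n \<omega>)^2) \<le> real n * (B * B)" for n
  proof -
    have "expectation (\<lambda>\<omega>. (S n \<omega>)^2) = (\<Sum>i\<in>{1..n}. \<Sum>j\<in>{1..n}. expectation (\<lambda>\<omega>. Y i \<omega> * Y j \<omega>))"
      unfolding sq
      by (subst Bochner_Integration.integral_sum, use intP in \<open>force intro!: Bochner_Integration.integrable_sum\<close>)
         (intro sum.cong refl Bochner_Integration.integral_sum, use intP in auto)
    also have "\<dots> = (\<Sum>i\<in>{1..n}. expectation (\<lambda>\<omega>. Y i \<omega> * Y i \<omega>))"
    proof (rule sum.cong[OF refl])
      fix i assume i: "i \<in> {1..n}"
      show "(\<Sum>j\<in>{1..n}. expectation (\<lambda>\<omega>. Y i \<omega> * Y j \<omega>)) = expectation (\<lambda>\<omega>. Y i \<omega> * Y i \<omega>)"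
        by (subst sum.remove[OF _ i]) (use i cross in \<open>auto intro!: sum.neutral\<close>)
    qed
    also have "\<dots> \<le> (\<Sum>i\<in>{1..n}. B * B)"
      by (intro sum_mono diag) auto
    finally show ?thesis by simp
  qed
  have bound: "prob {\<omega>\<in>space M. e < \<bar>S n \<omega> / real n\<bar>} \<le> B * B / e^2 * (1 / real n)" if n: "n \<ge> 1" for n
  proof -
    have np: "real n > 0" using n by simp
    have "prob {\<omega>\<in>space M. e < \<bar>S n \<omega> / real n\<bar>} \<le> prob {\<omega>\<in>space M. e * real n \<le> \<bar>S n \<omega> - expectation (S n)\<bar>}"
    proof (rule finite_measure_mono)
      show "{\<omega> \<in> space M. e < \<bar>S n \<omega> / real n\<bar>} \<subseteq> {\<omega> \<in> space M. e * real n \<le> \<bar>S n \<omega> - expectation (S n)\<bar>}"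
        using np by (auto simp: ES abs_divide pos_less_divide_eq)
    qed measurable
    also have "\<dots> \<le> variance (S n) / (e * real n)^2"
      by (rule Chebyshev_inequality) (use intS2 e np in auto)
    also have "variance (S n) = expectation (\<lambda>\<omega>. (S n \<omega>)^2)" by (simp add: ES)
    also have "expectation (\<lambda>\<omega>. (S n \<omega>)^2) / (e * real n)^2 \<le> real n * (B * B) / (e * real n)^2"
      by (intro divide_right_mono ES2) auto
    also have "\<dots> = B * B / e^2 * (1 / real n)"
      using np e by (simp add: field_simps power2_eq_square)
    finally show ?thesis .
  qed
  have lim: "(\<lambda>n. B * B / e^2 * (1 / real n)) \<longlonglongrightarrow> 0"
    by (intro tendsto_mult_right_zero lim_inverse_n')
  have ub: "eventually (\<lambda>n. prob {\<omega>\<in>space M. e < \<bar>S n \<omega> / real n\<bar>} \<le> B * B / e^2 * (1 / real n)) sequentially"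
    using bound by (intro eventually_sequentiallyI[of 1]) auto
  have lb: "eventually (\<lambda>n. 0 \<le> prob {\<omega>\<in>space M. e < \<bar>S n \<omega> / real n\<bar>}) sequentially"
    by simp
  have "(\<lambda>n. prob {\<omega>\<in>space M. e < \<bar>S n \<omega> / real n\<bar>}) \<longlonglongrightarrow> 0"
    by (rule tendsto_sandwich[OF lb ub tendsto_const lim])
  then show ?thesis unfolding S_def .
qed


definition allg :: "genotype set" where
  "allg = {G0000, G1111, G1101, G0111, G0101, G1100, G0011, G0100, G0001}"

lemma in_allg: "x \<in> allg" by (cases x) (auto simp: allg_def)

fun cf :: "est \<Rightarrow> genotype \<Rightarrow> real" where
  "cf E1 x = (if x = G1100 \<or> x = G0011 then 1/2 else if x = G1101 \<or> x = G0100 \<or> x = G0101 \<or> x = G0111 \<or> x = G0001 then 1/4 else 0)"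
| "cf E2A x = (if x = G0111 \<or> x = G0101 \<or> x = G0100 then 1/2 else 0)"
| "cf E2B x = (if x = G1101 \<or> x = G0101 \<or> x = G0001 then 1/2 else 0)"
| "cf E3 x = (if x = G0100 \<or> x = G0001 then 1/4 else if x = G0111 \<or> x = G1101 then -1/4 else 0)"
| "cf E4 x = (if x = G1100 then 1/2 else if x = G0011 then -1/2 else 0)"

lemma D_sum: "prob_vector9 D \<Longrightarrow> D 1 = 1 - (D 2 + D 3 + D 4 + D 5 + D 6 + D 7 + D 8 + D 9)"
  unfolding prob_vector9_def by (simp add: numeral_eq_Suc sum.atLeast_Suc_atMost)

lemma mean_E1: "prob_vector9 D \<Longrightarrow> D 8 = 0 \<Longrightarrow> (\<Sum>x\<in>allg. cf E1 x * geno_prob D q x) = (1 - theta D E1) * (q * (1 - q))"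
  apply (simp only: theta.simps D_sum)
  apply (simp add: allg_def Let_def field_simps power2_eq_square power3_eq_cube)
  done
lemma mean_E2A: "prob_vector9 D \<Longrightarrow> D 8 = 0 \<Longrightarrow> (\<Sum>x\<in>allg. cf E2A x * geno_prob D q x) = (1 - theta D E2A) * (q * (1 - q))"
  apply (simp only: theta.simps D_sum)
  apply (simp add: allg_def Let_def field_simps power2_eq_square power3_eq_cube)
  done
lemma mean_E2B: "prob_vector9 D \<Longrightarrow> D 8 = 0 \<Longrightarrow> (\<Sum>x\<in>allg. cf E2B x * geno_prob D q x) = (1 - theta D E2B) * (q * (1 - q))"
  apply (simp only: theta.simps D_sum)
  apply (simp add: allg_def Let_def field_simps power2_eq_square power3_eq_cube)
  done
lemma mean_E3: "prob_vector9 D \<Longrightarrow> (\<Sum>x\<in>allg. cf E3 x * geno_prob D q x) = (1 - theta D E3) * (q * (1 - q) * (1 - 2 * q))"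
  apply (simp only: theta.simps D_sum)
  apply (simp add: allg_def Let_def field_simps power2_eq_square power3_eq_cube)
  done
lemma mean_E4: "(\<Sum>x\<in>allg. cf E4 x * geno_prob D q x) = theta D E4 * (q * (1 - q) * (1 - 2 * q))"
  apply (simp add: allg_def Let_def)
  apply (simp add: algebra_simps power2_eq_square power3_eq_cube)
  done

lemma geno_sum: "prob_vector9 D \<Longrightarrow> (\<Sum>x\<in>allg. geno_prob D t x) = 1 - D 8 * t^2 * (1 - t)"
  using D_sum[of D]
  apply (simp add: allg_def Let_def field_simps power2_eq_square power3_eq_cube power4_eq_xxxx)
  done

lemma fhat_lin: "(1 / real n) * (\<Sum>i=1..n. c (X i \<omega>)) = (\<Sum>x\<in>allg. c x * fhat X n x \<omega>)"
proof -
  have "c (X i \<omega>) = (\<Sum>x\<in>allg. c x * (if X i \<omega> = x then 1 else 0))" for i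
    by (cases "X i \<omega>") (simp_all add: allg_def)
  then have "(\<Sum>i=1..n. c (X i \<omega>)) = (\<Sum>x\<in>allg. c x * (\<Sum>i=1..n. (if X i \<omega> = x then 1 else 0)))"
    by (simp add: sum_distrib_left sum.swap[of _ allg])
  then show ?thesis by (simp add: fhat_def sum_distrib_left algebra_simps)
qed

lemma tau_E1: "tau1 X n \<omega> = (\<Sum>x\<in>allg. cf E1 x * fhat X n x \<omega>)"
  by (simp add: allg_def tau1_def tau1A_def tau1B_def algebra_simps)
lemma tau_E2A: "tau2A X n \<omega> = (\<Sum>x\<in>allg. cf E2A x * fhat X n x \<omega>)"
  by (simp add: allg_def tau2A_def algebra_simps)
lemma tau_E2B: "tau2B X n \<omega> = (\<Sum>x\<in>allg. cf E2B x * fhat X n x \<omega>)"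
  by (simp add: allg_def tau2B_def algebra_simps)
lemma tau_E3: "tau3 X n \<omega> = (\<Sum>x\<in>allg. cf E3 x * fhat X n x \<omega>)"
  by (simp add: allg_def tau3_def algebra_simps)
lemma tau_E4: "tau4 X n \<omega> = (\<Sum>x\<in>allg. cf E4 x * fhat X n x \<omega>)"
  by (simp add: allg_def tau4_def algebra_simps)


lemma (in prob_space) exp_geno:
  assumes Xm: "X i \<in> measurable M (count_space UNIV)"
  shows "expectation (\<lambda>\<omega>. c (X i \<omega>)) = (\<Sum>x\<in>allg. c x * prob {\<omega>\<in>space M. X i \<omega> = (x::genotype)})"
proof -
  have sets: "{\<omega>\<in>space M. X i \<omega> = x} \<in> events" for x
  proof -
    have "X i -` {x} \<inter> space M \<in> sets M" by (rule measurable_sets[OF Xm]) simp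
    moreover have "{\<omega>\<in>space M. X i \<omega> = x} = X i -` {x} \<inter> space M" by auto
    ultimately show ?thesis by simp
  qed
  have pt: "c (X i \<omega>) = (\<Sum>x\<in>allg. c x * indicator {\<omega>\<in>space M. X i \<omega> = x} \<omega>)" if "\<omega> \<in> space M" for \<omega>
    using that by (cases "X i \<omega>") (auto simp: allg_def indicator_def)
  have "expectation (\<lambda>\<omega>. c (X i \<omega>)) = expectation (\<lambda>\<omega>. \<Sum>x\<in>allg. c x * indicator {\<omega>\<in>space M. X i \<omega> = x} \<omega>)"
    by (rule Bochner_Integration.integral_cong) (auto simp: pt)
  also have "\<dots> = (\<Sum>x\<in>allg. expectation (\<lambda>\<omega>. c x * indicator {\<omega>\<in>space M. X i \<omega> = x} \<omega>))"
    by (rule Bochner_Integration.integral_sum)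
       (auto intro!: integrable_mult_right integrable_real_indicator sets simp: less_top[symmetric])
  also have "\<dots> = (\<Sum>x\<in>allg. c x * prob {\<omega>\<in>space M. X i \<omega> = x})"
  proof (intro sum.cong refl)
    fix x
    have "{\<omega>\<in>space M. X i \<omega> = x} \<inter> space M = {\<omega>\<in>space M. X i \<omega> = x}" by auto
    then show "expectation (\<lambda>\<omega>. c x * indicator {\<omega>\<in>space M. X i \<omega> = x} \<omega>) = c x * prob {\<omega>\<in>space M. X i \<omega> = x}"
      by (simp add: integral_indicator)
  qed
  finally show ?thesis .
qed

lemma (in prob_space) wlln_geno:
  assumes ind: "indep_vars (\<lambda>_. count_space UNIV) X {1..}"
    and dist: "\<And>i x. i \<ge> 1 \<Longrightarrow> prob {\<omega>\<in>space M. X i \<omega> = x} = P i x"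
    and e: "e > 0"
  shows "(\<lambda>n. prob {\<omega>\<in>space M. e < \<bar>(1 / real n) * (\<Sum>i=1..n. c (X i \<omega>))
            - (1 / real n) * (\<Sum>i=1..n. \<Sum>x\<in>allg. c x * P i x)\<bar>}) \<longlonglongrightarrow> 0"
proof -
  have Xm: "X i \<in> measurable M (count_space UNIV)" if "i \<ge> 1" for i
    using ind that by (auto simp: indep_vars_def)
  define m where "m i = (\<Sum>x\<in>allg. c x * P i x)" for i
  have Em: "expectation (\<lambda>\<omega>. c (X i \<omega>)) = m i" if "i \<ge> 1" for i
    using exp_geno[of X i c, OF Xm[OF that]] dist[OF that] by (simp add: m_def)
  define B where "B = (\<Sum>x\<in>allg. \<bar>c x\<bar>)"
  have fin: "finite allg" by (simp add: allg_def)
  have cB: "\<bar>c x\<bar> \<le> B" for x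
    unfolding B_def by (rule member_le_sum[OF in_allg _ fin]) simp
  have B0: "0 \<le> B" using cB[of G0000] by simp
  have cXm: "(\<lambda>\<omega>. c (X i \<omega>)) \<in> borel_measurable M" if "i \<ge> 1" for i
    by (rule measurable_compose[OF Xm[OF that]]) (simp add: measurable_count_space_eq1)
  have intc: "integrable M (\<lambda>\<omega>. c (X i \<omega>))" if "i \<ge> 1" for i
    by (rule integrable_const_bound[of _ B]) (use cB cXm[OF that] in auto)
  have mB: "\<bar>m i\<bar> \<le> B" if "i \<ge> 1" for i
  proof -
    have "\<bar>expectation (\<lambda>\<omega>. c (X i \<omega>))\<bar> \<le> expectation (\<lambda>\<omega>. \<bar>c (X i \<omega>)\<bar>)"
      by (rule integral_abs_bound)
    also have "\<dots> \<le> expectation (\<lambda>\<omega>. B)"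
      by (rule integral_mono) (use intc[OF that] cB in auto)
    finally have "\<bar>expectation (\<lambda>\<omega>. c (X i \<omega>))\<bar> \<le> expectation (\<lambda>\<omega>. B)" .
    then show ?thesis using Em[OF that] by (simp add: prob_space)
  qed
  define Y where "Y i \<omega> = c (X i \<omega>) - m i" for i \<omega>
  have indY: "indep_vars (\<lambda>_. borel) Y {1..}"
  proof -
    have "indep_vars (\<lambda>_. borel) (\<lambda>i x. (\<lambda>i x. c x - m i) i (X i x)) {1..}"
      by (rule indep_vars_compose2[OF ind]) (simp add: measurable_count_space_eq1)
    then show ?thesis unfolding Y_def by simp
  qed
  have bnd: "\<bar>Y i \<omega>\<bar> \<le> B + B" if "i \<ge> 1" for i \<omega>
    unfolding Y_def using cB[of "X i \<omega>"] mB[OF that] by linarith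
  have mean0: "expectation (Y i) = 0" if "i \<ge> 1" for i
  proof -
    have "expectation (Y i) = expectation (\<lambda>\<omega>. c (X i \<omega>)) - expectation (\<lambda>\<omega>. m i)"
      unfolding Y_def by (rule Bochner_Integration.integral_diff[OF intc[OF that] integrable_const])
    then show ?thesis using Em[OF that] by (simp add: prob_space)
  qed
  have lim: "(\<lambda>n. prob {\<omega>\<in>space M. e < \<bar>(\<Sum>i=1..n. Y i \<omega>) / real n\<bar>}) \<longlonglongrightarrow> 0"
    by (rule wlln_bounded[OF indY bnd _ mean0 e]) (use B0 in auto)
  have eq: "(\<Sum>i=1..n. Y i \<omega>) / real n = (1 / real n) * (\<Sum>i=1..n. c (X i \<omega>))
            - (1 / real n) * (\<Sum>i=1..n. m i)" for n \<omega>
    by (simp add: Y_def sum_subtractf diff_divide_distrib)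
  show ?thesis using lim by (simp only: eq m_def)
qed

lemma final_step:
  fixes Z T :: "nat \<Rightarrow> 'a \<Rightarrow> real"
  assumes ps: "prob_space M" and nu: "\<nu> \<noteq> 0" and cv: "conv_in_prob M (\<lambda>n _. V n) \<nu>"
    and Tm: "\<And>n. T n \<in> borel_measurable M"
    and hT: "\<And>e. e > 0 \<Longrightarrow> (\<lambda>n. measure M {\<omega>\<in>space M. e < \<bar>T n \<omega> - mm n\<bar>}) \<longlonglongrightarrow> 0"
    and heq: "\<And>n \<omega>. V n \<noteq> 0 \<Longrightarrow> \<bar>Z n \<omega> - \<theta>\<bar> = \<bar>T n \<omega> - mm n\<bar> / \<bar>V n\<bar>"
  shows "conv_in_prob M Z \<theta>"
proof -
  interpret prob_space M by (rule ps)
  have ev: "eventually (\<lambda>n. \<bar>\<nu>\<bar> / 2 \<le> \<bar>V n\<bar>) sequentially"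
  proof -
    have "(\<lambda>n. measure M {\<omega>\<in>space M. \<bar>\<nu>\<bar> / 2 < \<bar>V n - \<nu>\<bar>}) \<longlonglongrightarrow> 0"
    proof -
      have h: "\<forall>e>0. (\<lambda>n. measure M {\<omega>\<in>space M. e < \<bar>V n - \<nu>\<bar>}) \<longlonglongrightarrow> 0"
        using cv unfolding conv_in_prob_def .
      have "\<bar>\<nu>\<bar> / 2 > 0" using nu by simp
      with h show ?thesis by blast
    qed
    then have "eventually (\<lambda>n. measure M {\<omega>\<in>space M. \<bar>\<nu>\<bar> / 2 < \<bar>V n - \<nu>\<bar>} < 1) sequentially"
      by (rule order_tendstoD) simp
    then show ?thesis
    proof (rule eventually_mono)
      fix n assume "measure M {\<omega>\<in>space M. \<bar>\<nu>\<bar> / 2 < \<bar>V n - \<nu>\<bar>} < 1"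
      then have "\<not> \<bar>\<nu>\<bar> / 2 < \<bar>V n - \<nu>\<bar>" using prob_space by (cases "\<bar>\<nu>\<bar> / 2 < \<bar>V n - \<nu>\<bar>") auto
      then show "\<bar>\<nu>\<bar> / 2 \<le> \<bar>V n\<bar>" by arith
    qed
  qed
  show ?thesis unfolding conv_in_prob_def
  proof (intro allI impI)
    fix e :: real assume e: "e > 0"
    have lim: "(\<lambda>n. measure M {\<omega>\<in>space M. e * (\<bar>\<nu>\<bar> / 2) < \<bar>T n \<omega> - mm n\<bar>}) \<longlonglongrightarrow> 0"
      by (rule hT) (use e nu in simp)
    have ub: "eventually (\<lambda>n. measure M {\<omega>\<in>space M. e < \<bar>Z n \<omega> - \<theta>\<bar>}
              \<le> measure M {\<omega>\<in>space M. e * (\<bar>\<nu>\<bar> / 2) < \<bar>T n \<omega> - mm n\<bar>}) sequentially"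
      using ev
    proof (rule eventually_mono)
      fix n assume h: "\<bar>\<nu>\<bar> / 2 \<le> \<bar>V n\<bar>"
      then have Vn: "V n \<noteq> 0" using nu by auto
      note Tm[measurable]
      show "measure M {\<omega>\<in>space M. e < \<bar>Z n \<omega> - \<theta>\<bar>}
              \<le> measure M {\<omega>\<in>space M. e * (\<bar>\<nu>\<bar> / 2) < \<bar>T n \<omega> - mm n\<bar>}"
      proof (rule finite_measure_mono)
        show "{\<omega>\<in>space M. e < \<bar>Z n \<omega> - \<theta>\<bar>} \<subseteq> {\<omega>\<in>space M. e * (\<bar>\<nu>\<bar> / 2) < \<bar>T n \<omega> - mm n\<bar>}"
        proof safe
          fix \<omega> assume "\<omega> \<in> space M" "e < \<bar>Z n \<omega> - \<theta>\<bar>"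
          then have "e < \<bar>T n \<omega> - mm n\<bar> / \<bar>V n\<bar>" using heq[OF Vn] by simp
          then have a: "e * \<bar>V n\<bar> < \<bar>T n \<omega> - mm n\<bar>" using Vn by (simp add: pos_less_divide_eq)
          have "e * (\<bar>\<nu>\<bar> / 2) \<le> e * \<bar>V n\<bar>" using h e by (intro mult_left_mono) auto
          with a show "e * (\<bar>\<nu>\<bar> / 2) < \<bar>T n \<omega> - mm n\<bar>" by linarith
        qed
      qed measurable
    qed
    have lb: "eventually (\<lambda>n. 0 \<le> measure M {\<omega>\<in>space M. e < \<bar>Z n \<omega> - \<theta>\<bar>}) sequentially"
      by simp
    show "(\<lambda>n. measure M {\<omega>\<in>space M. e < \<bar>Z n \<omega> - \<theta>\<bar>}) \<longlonglongrightarrow> 0"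
      by (rule tendsto_sandwich[OF lb ub tendsto_const lim])
  qed
qed

lemma absA: "V \<noteq> 0 \<Longrightarrow> \<bar>(1 - T / V) - \<theta>\<bar> = \<bar>T - (1 - \<theta>) * V\<bar> / \<bar>(V::real)\<bar>"
proof -
  assume V: "V \<noteq> 0"
  have "(1 - T / V) - \<theta> = - ((T - (1 - \<theta>) * V) / V)" using V by (simp add: field_simps)
  then show ?thesis by (simp add: abs_divide)
qed

lemma absB: "V \<noteq> 0 \<Longrightarrow> \<bar>T / V - \<theta>\<bar> = \<bar>T - \<theta> * V\<bar> / \<bar>(V::real)\<bar>"
proof -
  assume V: "V \<noteq> 0"
  have "T / V - \<theta> = (T - \<theta> * V) / V" using V by (simp add: field_simps)
  then show ?thesis by (simp add: abs_divide)
qed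
theorem theorem5:
  fixes M :: "'a measure" and D :: "nat \<Rightarrow> real" and p :: "nat \<Rightarrow> real"
    and X :: "nat \<Rightarrow> 'a \<Rightarrow> genotype" and nu2 nu3 :: real
  assumes "prob_space M"
    and "prob_vector9 D"
    and "\<forall>i\<ge>1. 0 \<le> p i \<and> p i \<le> 1"
    and "prob_space.indep_vars M (\<lambda>_. count_space UNIV) X {1..}"
    and "\<forall>i\<ge>1. \<forall>x. measure M {\<omega> \<in> space M. X i \<omega> = x} = geno_prob D (p i) x"
    and "nu2 \<noteq> 0" and "nu3 \<noteq> 0"
    and "conv_in_prob M (\<lambda>n _. nu2bar p n) nu2"
    and "conv_in_prob M (\<lambda>n _. nu3bar p n) nu3"
  shows "\<forall>y. conv_in_prob M (theta_hat p X y) (theta D y)"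
proof -
  note ps = assms(1) and pv = assms(2) and ind = assms(4) and dist = assms(5)
  interpret prob_space M by (rule ps)
  have Xm: "X i \<in> measurable M (count_space UNIV)" if "i \<ge> 1" for i
    using ind that by (auto simp: indep_vars_def)
  have D8: "D 8 = 0"
  proof (rule ccontr)
    assume D8: "D 8 \<noteq> 0"
    have pz: "p i * (1 - p i) = 0" if i: "i \<ge> 1" for i
    proof -
      have "expectation (\<lambda>\<omega>. (\<lambda>_. 1::real) (X i \<omega>)) = (\<Sum>x\<in>allg. 1 * prob {\<omega>\<in>space M. X i \<omega> = x})"
        by (rule exp_geno[of X i, OF Xm[OF i]])
      then have "1 = (\<Sum>x\<in>allg. geno_prob D (p i) x)" using dist i by (simp add: prob_space)
      then have "D 8 * (p i)^2 * (1 - p i) = 0" using geno_sum[OF pv, of "p i"] by simp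
      then show ?thesis using D8 by (simp add: power2_eq_square)
    qed
    have "nu2bar p n = 0" for n unfolding nu2bar_def by (simp add: pz)
    moreover have "(\<lambda>n. measure M {\<omega>\<in>space M. \<bar>nu2\<bar> / 2 < \<bar>nu2bar p n - nu2\<bar>}) \<longlonglongrightarrow> 0"
    proof -
      have h: "\<forall>e>0. (\<lambda>n. measure M {\<omega>\<in>space M. e < \<bar>nu2bar p n - nu2\<bar>}) \<longlonglongrightarrow> 0"
        using assms(8) unfolding conv_in_prob_def .
      have "\<bar>nu2\<bar> / 2 > 0" using assms(6) by simp
      with h show ?thesis by blast
    qed
    ultimately have "(\<lambda>n. 1::real) \<longlonglongrightarrow> 0" using assms(6) by (simp add: prob_space)
    then show False by (simp add: LIMSEQ_const_iff)
  qed
  have Tm: "(\<lambda>\<omega>. (1 / real n) * (\<Sum>i=1..n. c (X i \<omega>))) \<in> borel_measurable M" for n and c :: "genotype \<Rightarrow> real"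
  proof -
    have "(\<lambda>\<omega>. c (X i \<omega>)) \<in> borel_measurable M" if "i \<in> {1..n}" for i
      by (rule measurable_compose[OF Xm]) (use that in \<open>auto simp: measurable_count_space_eq1\<close>)
    then show ?thesis by (intro borel_measurable_times borel_measurable_const borel_measurable_sum) auto
  qed
  have hT: "\<And>e. e > 0 \<Longrightarrow> (\<lambda>n. measure M {\<omega>\<in>space M. e < \<bar>(1 / real n) * (\<Sum>i=1..n. c (X i \<omega>))
            - (1 / real n) * (\<Sum>i=1..n. \<Sum>x\<in>allg. c x * geno_prob D (p i) x)\<bar>}) \<longlonglongrightarrow> 0"
    for c :: "genotype \<Rightarrow> real"
    by (rule wlln_geno[OF ind]) (use dist in auto)
  have mm2: "(1 / real n) * (\<Sum>i=1..n. \<Sum>x\<in>allg. c x * geno_prob D (p i) x) = k * nu2bar p n"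
    if "\<And>t. (\<Sum>x\<in>allg. c x * geno_prob D t x) = k * (t * (1 - t))" for c k n
    unfolding nu2bar_def by (simp add: that sum_distrib_left)
  have mm3: "(1 / real n) * (\<Sum>i=1..n. \<Sum>x\<in>allg. c x * geno_prob D (p i) x) = k * nu3bar p n"
    if "\<And>t. (\<Sum>x\<in>allg. c x * geno_prob D t x) = k * (t * (1 - t) * (1 - 2 * t))" for c k n
    unfolding nu3bar_def by (simp add: that sum_distrib_left)
  have tauT: "(\<Sum>x\<in>allg. c x * fhat X n x \<omega>) = (1 / real n) * (\<Sum>i=1..n. c (X i \<omega>))" for c n \<omega>
    by (rule fhat_lin[symmetric])
  show ?thesis
  proof
    fix y show "conv_in_prob M (theta_hat p X y) (theta D y)"
    proof (cases y)
      case E1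
      show ?thesis unfolding E1
        by (rule final_step[OF ps assms(6) assms(8) Tm[of _ "cf E1"] hT[of _ "cf E1"]])
           (assumption, simp only: theta_hat.simps tau_E1 tauT mm2[OF mean_E1[OF pv D8]], erule absA)
    next
      case E2A
      show ?thesis unfolding E2A
        by (rule final_step[OF ps assms(6) assms(8) Tm[of _ "cf E2A"] hT[of _ "cf E2A"]])
           (assumption, simp only: theta_hat.simps tau_E2A tauT mm2[OF mean_E2A[OF pv D8]], erule absA)
    next
      case E2B
      show ?thesis unfolding E2B
        by (rule final_step[OF ps assms(6) assms(8) Tm[of _ "cf E2B"] hT[of _ "cf E2B"]])
           (assumption, simp only: theta_hat.simps tau_E2B tauT mm2[OF mean_E2B[OF pv D8]], erule absA)
    next
      case E3
      show ?thesis unfolding E3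
        by (rule final_step[OF ps assms(7) assms(9) Tm[of _ "cf E3"] hT[of _ "cf E3"]])
           (assumption, simp only: theta_hat.simps tau_E3 tauT mm3[OF mean_E3[OF pv]], erule absA)
    next
      case E4
      show ?thesis unfolding E4
        by (rule final_step[OF ps assms(7) assms(9) Tm[of _ "cf E4"] hT[of _ "cf E4"]])
           (assumption, simp only: theta_hat.simps tau_E4 tauT mm3[OF mean_E4], erule absB)
    qed
  qed
qed
end
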